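(* Let $\Gamma$ be an elliptic graph, $v_0$ an end-vertex of $\Gamma$, and let $\Gamma_{new}$ be obtained from $\Gamma$ by attaching new vertices $v_1,\dots,v_s$ ($s\ge1$), each joined by a single edge to $v_0$ only, such that $\Gamma_{new}$ is an elliptic graph. Let $\check\ell\in Supp(\check P_0^\Gamma)$ and suppose $\Pi:=\{x\in Supp(\check P_0^{\Gamma_{new}}):\check\pi_{(\Gamma,\Gamma_{new})}(x)=\check\ell\}$ is nonempty. Then $$\sum_{x\in\Pi}z^{\Gamma_{new}}(x)=z^{\Gamma}(\check\ell).$$
   Context: For a decorated tree $G$ (vertex set $\mathcal V(G)$, integer decorations $e_v$, genera zero, negative definite form on $L(G)=\mathbb Z\langle E_v\rangle$ with $(E_v,E_v)=e_v$, $(E_v,E_w)=1$ for adjacent $v\ne w$, $0$ otherwise) let $L'(G)=\{l'\in L(G)\otimes\mathbb Q:(l',L(G))\subset\mathbb Z\}$, $E_v^*$ with $(E_v^*,E_w)=-\delta_{vw}$, $\delta_v$ the valency, $E^G=\sum E_v$, $Z_K^G$ with $(Z_K^G,E_v)=e_v+2$, $\chi(l')=-(l',l'-Z_K^G)/2$; $\ge$ coordinatewise, $\prec$ strict in all coordinates, $l>0$ if $l\ge0,l\ne0$. $Z^G(\mathbf t)=\sum_{l'}z^G(l')\mathbf t^{l'}$ is the Taylor expansion at $0$ of $\prod_v(1-\mathbf t^{E_v^*})^{\delta_v-2}$ ($\mathbf t^{l'}=\prod t_v^{l'_v}$). The set of dual exponents is $Supp(\check P_0^G)=\{Z^G_K-E^G-\ell:\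 \ell\in L(G),\ \ell\not\prec0,\ z^G(Z^G_K-E^G-\ell)\ne0\}$. $G$ is elliptic if $e_v\le-2$ for all $v$ and $\min_{l\in L(G),l>0}\chi(l)=0$. An end-vertex of $\Gamma$ is a vertex of valency 1 in $\Gamma$. For a connected full subgraph $\Gamma'\subset\Gamma''$, $\check\pi_{(\Gamma',\Gamma'')}(x)=Z_K^{\Gamma'}-E^{\Gamma'}-(Z_K^{\Gamma''}-E^{\Gamma''}-x)|_{\Gamma'}$, where $|_{\Gamma'}$ restricts coefficients to vertices of $\Gamma'$. *)

theory Defs
  imports Complex_Main
begin

text \<open>Elements of L(G) tensor Q are functions 'v => rat vanishing
 outside V; the value at u is the coefficient of E_u.\<close>

definition supp_in :: "'v set \<Rightarrow> ('v \<Rightarrow> rat) \<Rightarrow> bool" where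
  "supp_in V x \<longleftrightarrow> (\<forall>u. u \<notin> V \<longrightarrow> x u = 0)"

definition in_L :: "'v set \<Rightarrow> ('v \<Rightarrow> rat) \<Rightarrow> bool" where
  "in_L V x \<longleftrightarrow> supp_in V x \<and> (\<forall>u\<in>V. x u \<in> \<int>)"

definition Ebas :: "'v \<Rightarrow> 'v \<Rightarrow> rat" where
  "Ebas v = (\<lambda>u. if u = v then 1 else 0)"

definition EG :: "'v set \<Rightarrow> 'v \<Rightarrow> rat" where
  "EG V = (\<lambda>u. if u \<in> V then 1 else 0)"

definition restr :: "'v set \<Rightarrow> ('v \<Rightarrow> rat) \<Rightarrow> 'v \<Rightarrow> rat" where
  "restr V x = (\<lambda>u. if u \<in> V then x u else 0)"

definition inter :: "'v set \<Rightarrow> ('v \<Rightarrow> 'v \<Rightarrow> bool) \<Rightarrow> ('v \<Rightarrow> int)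
    \<Rightarrow> ('v \<Rightarrow> rat) \<Rightarrow> ('v \<Rightarrow> rat) \<Rightarrow> rat" where
  "inter V adj e x y = (\<Sum>u\<in>V. \<Sum>w\<in>V. x u * y w *
      (if u = w then of_int (e u) else if adj u w then 1 else 0))"

definition valency :: "'v set \<Rightarrow> ('v \<Rightarrow> 'v \<Rightarrow> bool) \<Rightarrow> 'v \<Rightarrow> nat" where
  "valency V adj v = card {w\<in>V. adj v w}"

text \<open>Standing assumptions: a finite (nonempty) tree with negative definite form.\<close>
definition decorated_tree :: "'v set \<Rightarrow> ('v \<Rightarrow> 'v \<Rightarrow> bool) \<Rightarrow> ('v \<Rightarrow> int) \<Rightarrow> bool" where
  "decorated_tree V adj e \<longleftrightarrow>
     finite V \<and> V \<noteq> {} \<and>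
     (\<forall>u w. adj u w \<longrightarrow> u \<in> V \<and> w \<in> V) \<and>
     (\<forall>u w. adj u w \<longrightarrow> adj w u) \<and>
     (\<forall>u. \<not> adj u u) \<and>
     (\<forall>u\<in>V. \<forall>w\<in>V. adj\<^sup>*\<^sup>* u w) \<and>
     card {(u, w). adj u w} = 2 * (card V - 1) \<and>
     (\<forall>x. supp_in V x \<and> x \<noteq> (\<lambda>_. 0) \<longrightarrow> inter V adj e x x < 0)"

definition Estar :: "'v set \<Rightarrow> ('v \<Rightarrow> 'v \<Rightarrow> bool) \<Rightarrow> ('v \<Rightarrow> int) \<Rightarrow> 'v \<Rightarrow> 'v \<Rightarrow> rat" where
  "Estar V adj e v = (THE x. supp_in V x \<and>
      (\<forall>w\<in>V. inter V adj e x (Ebas w) = (if v = w then -1 else 0)))"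

definition ZK :: "'v set \<Rightarrow> ('v \<Rightarrow> 'v \<Rightarrow> bool) \<Rightarrow> ('v \<Rightarrow> int) \<Rightarrow> 'v \<Rightarrow> rat" where
  "ZK V adj e = (THE x. supp_in V x \<and>
      (\<forall>w\<in>V. inter V adj e x (Ebas w) = of_int (e w) + 2))"

definition chi :: "'v set \<Rightarrow> ('v \<Rightarrow> 'v \<Rightarrow> bool) \<Rightarrow> ('v \<Rightarrow> int) \<Rightarrow> ('v \<Rightarrow> rat) \<Rightarrow> rat" where
  "chi V adj e l = - inter V adj e l (l - ZK V adj e) / 2"

definition pos_vec :: "'v set \<Rightarrow> ('v \<Rightarrow> rat) \<Rightarrow> bool" where
  "pos_vec V l \<longleftrightarrow> (\<forall>u\<in>V. l u \<ge> 0) \<and> (\<exists>u\<in>V. l u \<noteq> 0)"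

definition strict_neg :: "'v set \<Rightarrow> ('v \<Rightarrow> rat) \<Rightarrow> bool" where
  "strict_neg V l \<longleftrightarrow> (\<forall>u\<in>V. l u < 0)"

definition elliptic :: "'v set \<Rightarrow> ('v \<Rightarrow> 'v \<Rightarrow> bool) \<Rightarrow> ('v \<Rightarrow> int) \<Rightarrow> bool" where
  "elliptic V adj e \<longleftrightarrow> decorated_tree V adj e \<and> (\<forall>v\<in>V. e v \<le> -2) \<and>
     (\<forall>l. in_L V l \<and> pos_vec V l \<longrightarrow> chi V adj e l \<ge> 0) \<and>
     (\<exists>l. in_L V l \<and> pos_vec V l \<and> chi V adj e l = 0)"

text \<open>Coefficient of x^k in the Taylor expansion of (1-x)^n at 0, n an integer.\<close>
definition taylor_coeff :: "int \<Rightarrow> nat \<Rightarrow> int" where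
  "taylor_coeff n k = (if n \<ge> 0 then (-1) ^ k * int (nat n choose k)
                       else int ((k + nat (- n) - 1) choose k))"

text \<open>z^G(l'): coefficient of t^{l'} in the expansion of prod_v (1 - t^{E_v^*})^{delta_v - 2},
  obtained by multiplying out the single-variable expansions of the factors.\<close>
definition zcoef :: "'v set \<Rightarrow> ('v \<Rightarrow> 'v \<Rightarrow> bool) \<Rightarrow> ('v \<Rightarrow> int) \<Rightarrow> ('v \<Rightarrow> rat) \<Rightarrow> int" where
  "zcoef V adj e l' = (\<Sum>k\<in>{k :: 'v \<Rightarrow> nat. (\<forall>u. u \<notin> V \<longrightarrow> k u = 0) \<and>
        (\<lambda>u. \<Sum>v\<in>V. of_nat (k v) * Estar V adj e v u) = l'}.
      \<Prod>v\<in>V. taylor_coeff (int (valency V adj v) - 2) (k v))"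

definition supp_dual :: "'v set \<Rightarrow> ('v \<Rightarrow> 'v \<Rightarrow> bool) \<Rightarrow> ('v \<Rightarrow> int) \<Rightarrow> ('v \<Rightarrow> rat) set" where
  "supp_dual V adj e = {ZK V adj e - EG V - l | l. in_L V l \<and> \<not> strict_neg V l \<and>
       zcoef V adj e (ZK V adj e - EG V - l) \<noteq> 0}"

definition proj_dual :: "'v set \<Rightarrow> ('v \<Rightarrow> 'v \<Rightarrow> bool) \<Rightarrow> ('v \<Rightarrow> int) \<Rightarrow>
    'v set \<Rightarrow> ('v \<Rightarrow> 'v \<Rightarrow> bool) \<Rightarrow> ('v \<Rightarrow> int) \<Rightarrow> ('v \<Rightarrow> rat) \<Rightarrow> 'v \<Rightarrow> rat" where
  "proj_dual V1 adj1 e1 V2 adj2 e2 x =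
     ZK V1 adj1 e1 - EG V1 - restr V1 (ZK V2 adj2 e2 - EG V2 - x)"

end

theory Submission
  imports Defs "HOL-Library.FuncSet"
begin

definition Bset :: "'v set \<Rightarrow> nat \<Rightarrow> ('v \<Rightarrow> nat) set" where
  "Bset W J = {n. (\<forall>u. u \<notin> W \<longrightarrow> n u = 0) \<and> sum n W \<le> J}"

lemma Bset_finite: assumes "finite W" shows "finite (Bset W J)"
proof -
  have sub: "(\<lambda>n. restrict n W) ` Bset W J \<subseteq> PiE W (\<lambda>_. {0..J})"
  proof
    fix f assume "f \<in> (\<lambda>n. restrict n W) ` Bset W J"
    then obtain n where n: "n \<in> Bset W J" "f = restrict n W" by auto
    have "\<forall>w\<in>W. n w \<le> J"
    proof
      fix w assume "w \<in> W"
      then have "n w \<le> sum n W" using assms by (intro member_le_sum) auto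
      then show "n w \<le> J" using n unfolding Bset_def by auto
    qed
    then show "f \<in> PiE W (\<lambda>_. {0..J})" using n by (auto simp: PiE_iff)
  qed
  have "finite ((\<lambda>n. restrict n W) ` Bset W J)"
    by (rule finite_subset[OF sub]) (simp add: assms finite_PiE)
  moreover have "inj_on (\<lambda>n. restrict n W) (Bset W J)"
  proof
    fix a b assume "a \<in> Bset W J" "b \<in> Bset W J" "restrict a W = restrict b W"
    show "a = b"
    proof
      fix x show "a x = b x"
      proof (cases "x \<in> W")
        case True
        then have "restrict a W x = restrict b W x" using \<open>restrict a W = restrict b W\<close> by simp
        then show ?thesis using True by simp
      next
        case False
        then show ?thesis using \<open>a \<in> Bset W J\<close> \<open>b \<in> Bset W J\<close> unfolding Bset_def by simp
      qed
    qed
  qed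
  ultimately show ?thesis using finite_imageD by blast
qed

lemma Bset_insert_sum:
  assumes "finite W" "w \<notin> W"
  shows "(\<Sum>n\<in>Bset (insert w W) J. f n) =
         (\<Sum>m\<in>{..J}. \<Sum>n'\<in>Bset W (J - m). f (n'(w := m)))"
proof -
  have "(\<Sum>m\<in>{..J}. \<Sum>n'\<in>Bset W (J - m). f (n'(w := m))) =
        (\<Sum>p\<in>(SIGMA m:{..J}. Bset W (J - m)). f ((snd p)(w := fst p)))"
    by (subst sum.Sigma) (auto simp: Bset_finite assms split_beta)
  also have "\<dots> = (\<Sum>n\<in>Bset (insert w W) J. f n)"
  proof (rule sum.reindex_bij_witness[where i = "\<lambda>n. (n w, n(w := 0))" and j = "\<lambda>p. (snd p)(w := fst p)"])
    fix p assume p: "p \<in> (SIGMA m:{..J}. Bset W (J - m))"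
    then have "snd p w = 0" using assms unfolding Bset_def by auto
    then show "(((snd p)(w := fst p)) w, ((snd p)(w := fst p))(w := 0)) = p"
      by (cases p) auto
    have s: "sum ((snd p)(w := fst p)) (insert w W) = fst p + sum (snd p) W"
      using assms by (simp add: sum.insert) (intro sum.cong; auto)
    show "(snd p)(w := fst p) \<in> Bset (insert w W) J"
      using p s unfolding Bset_def by auto
  next
    fix n assume n: "n \<in> Bset (insert w W) J"
    show "(snd (n w, n(w := 0)))(w := fst (n w, n(w := 0))) = n" by auto
    have s: "sum n (insert w W) = n w + sum (n(w := 0)) W"
      using assms by (simp add: sum.insert) (intro sum.cong; auto)
    show "(n w, n(w := 0)) \<in> (SIGMA m:{..J}. Bset W (J - m))"
      using n s unfolding Bset_def by auto
  next
    fix p assume "p \<in> (SIGMA m:{..J}. Bset W (J - m))"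
    then show "f ((snd p)(w := fst p)) = f ((snd p)(w := fst p))" by simp
  qed
  finally show ?thesis by simp
qed

lemma Bset_empty: "Bset {} J = {\<lambda>_. 0}"
  unfolding Bset_def by auto

lemma pascal_alt:
  assumes "s \<ge> 1"
  shows "(-1::int)^j * int (s choose j) =
     (-1)^j * int ((s - 1) choose j) - (if j = 0 then 0 else (-1)^(j - 1) * int ((s - 1) choose (j - 1)))"
proof (cases j)
  case 0 then show ?thesis by simp
next
  case (Suc i)
  obtain t where t: "s = Suc t" using assms by (cases s) auto
  have "s choose j = (t choose Suc i) + (t choose i)" using t Suc by simp
  then show ?thesis using t Suc by (simp add: algebra_simps)
qed

lemma comb_id:
  assumes "finite W" "W \<noteq> {}"
  shows "(\<Sum>n\<in>Bset W J. (-1::int)^(J - sum n W) * int ((card W - 1) choose (J - sum n W))) = 1"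
  using assms
proof (induction W arbitrary: J rule: finite_ne_induct)
  case (singleton w)
  have "(\<Sum>n\<in>Bset {w} J. (-1::int)^(J - sum n {w}) * int ((card {w} - 1) choose (J - sum n {w})))
     = (\<Sum>m\<in>{..J}. \<Sum>n'\<in>Bset {} (J - m). (-1::int)^(J - sum (n'(w := m)) {w}) *
            int ((card {w} - 1) choose (J - sum (n'(w := m)) {w})))"
    by (rule Bset_insert_sum) auto
  also have "\<dots> = (\<Sum>m\<in>{..J}. if m = J then 1 else 0)"
    by (intro sum.cong) (auto simp: Bset_empty)
  also have "\<dots> = 1" by simp
  finally show ?case .
next
  case (insert w F)
  let ?s = "card F"
  have s1: "?s \<ge> 1" using insert by (simp add: Suc_leI card_gt_0_iff)
  have cI: "card (insert w F) - 1 = ?s" using insert by simp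
  define g where "g = (\<lambda>j::nat. (-1::int)^j * int ((?s - 1) choose j))"
  have IH: "\<And>J. (\<Sum>n\<in>Bset F J. g (J - sum n F)) = 1" using insert.IH by (simp add: g_def)
  have inner: "(\<Sum>n\<in>Bset F J'. (-1::int)^(J' - sum n F) * int (?s choose (J' - sum n F)))
      = (if J' = 0 then 1 else 0)" for J'
  proof -
    have "(\<Sum>n\<in>Bset F J'. (-1::int)^(J' - sum n F) * int (?s choose (J' - sum n F)))
       = (\<Sum>n\<in>Bset F J'. g (J' - sum n F)) -
         (\<Sum>n\<in>Bset F J'. if J' - sum n F = 0 then 0 else g (J' - sum n F - 1))"
      unfolding sum_subtractf[symmetric]
    proof (intro sum.cong refl)
      fix n
      show "(-1::int)^(J' - sum n F) * int (?s choose (J' - sum n F)) =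
          g (J' - sum n F) - (if J' - sum n F = 0 then 0 else g (J' - sum n F - 1))"
        unfolding g_def by (rule pascal_alt[OF s1])
    qed
    also have "(\<Sum>n\<in>Bset F J'. if J' - sum n F = 0 then 0 else g (J' - sum n F - 1))
        = (if J' = 0 then 0 else 1)"
    proof (cases "J' = 0")
      case True
      have "\<forall>n\<in>Bset F J'. J' - sum n F = 0" using True by simp
      then show ?thesis using True by simp
    next
      case False
      have "(\<Sum>n\<in>Bset F J'. if J' - sum n F = 0 then 0 else g (J' - sum n F - 1))
          = (\<Sum>n\<in>Bset F (J' - 1). g ((J' - 1) - sum n F))"
      proof (rule sum.mono_neutral_cong_right)
        show "finite (Bset F J')" using insert by (simp add: Bset_finite)
        show "Bset F (J' - 1) \<subseteq> Bset F J'" unfolding Bset_def by auto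
        show "\<forall>n\<in>Bset F J' - Bset F (J' - 1). (if J' - sum n F = 0 then 0 else g (J' - sum n F - 1)) = 0"
        proof
          fix n assume n: "n \<in> Bset F J' - Bset F (J' - 1)"
          then have "sum n F \<le> J'" "\<not> sum n F \<le> J' - 1" unfolding Bset_def by auto
          then have "J' - sum n F = 0" by arith
          then show "(if J' - sum n F = 0 then 0 else g (J' - sum n F - 1)) = 0" by simp
        qed
        show "\<And>n. n \<in> Bset F (J' - 1) \<Longrightarrow> (if J' - sum n F = 0 then 0 else g (J' - sum n F - 1)) = g ((J' - 1) - sum n F)"
          using False unfolding Bset_def by auto
      qed
      then show ?thesis using False IH[of "J' - 1"] by simp
    qed
    finally show ?thesis using IH by simp
  qed
  have sw: "sum (n'(w := m)) (insert w F) = m + sum n' F" for n' m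
  proof -
    have "sum (n'(w := m)) F = sum n' F" using insert by (intro sum.cong) auto
    then show ?thesis using insert by simp
  qed
  have "(\<Sum>n\<in>Bset (insert w F) J. (-1::int)^(J - sum n (insert w F)) * int ((card (insert w F) - 1) choose (J - sum n (insert w F))))
     = (\<Sum>m\<in>{..J}. \<Sum>n'\<in>Bset F (J - m). (-1::int)^((J - m) - sum n' F) * int (?s choose ((J - m) - sum n' F)))"
    unfolding cI using insert by (subst Bset_insert_sum) (simp_all only: sw diff_diff_left not_False_eq_True)
  also have "\<dots> = (\<Sum>m\<in>{..J}. if J - m = 0 then 1 else 0)"
    by (intro sum.cong refl) (rule inner)
  also have "\<dots> = (\<Sum>m\<in>{..J}. if m = J then 1 else 0)" by (intro sum.cong) auto
  also have "\<dots> = 1" by simp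
  finally show ?case .
qed

definition Qf :: "'v set \<Rightarrow> ('v \<Rightarrow> 'v \<Rightarrow> rat) \<Rightarrow> ('v \<Rightarrow> rat) \<Rightarrow> rat" where
  "Qf V M x = (\<Sum>u\<in>V. \<Sum>w\<in>V. x u * x w * M u w)"

lemma Qf_insert:
  assumes "finite V" "a \<notin> V"
  shows "Qf (insert a V) M z = z a * z a * M a a + (\<Sum>w\<in>V. z a * z w * M a w)
     + (\<Sum>u\<in>V. z u * z a * M u a) + Qf V M z"
  using assms by (simp add: Qf_def sum.distrib add_ac)

lemma Qf_Ebas:
  assumes "finite V" "a \<in> V"
  shows "Qf V M (Ebas a) = M a a"
proof -
  have "Qf V M (Ebas a) = (\<Sum>u\<in>V. if u = a then (\<Sum>w\<in>V. if w = a then M u w else 0) else 0)"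
    unfolding Qf_def Ebas_def by (intro sum.cong refl) (auto intro!: sum.cong)
  also have "\<dots> = M a a" using assms by simp
  finally show ?thesis .
qed
lemma solve_sym:
  assumes "finite V" "\<And>u w. M u w = M w u"
    "\<And>x. supp_in V x \<Longrightarrow> x \<noteq> (\<lambda>_. 0) \<Longrightarrow> Qf V M x < 0"
  shows "\<exists>x. supp_in V x \<and> (\<forall>u\<in>V. (\<Sum>b\<in>V. x b * M b u) = c u)"
  using assms
proof (induction V arbitrary: M c rule: finite_induct)
  case empty
  show ?case by (rule exI[of _ "\<lambda>_. 0"]) (simp add: supp_in_def)
next
  case (insert a V)
  define m where "m = M a a"
  have "Qf (insert a V) M (Ebas a) < 0"
    using insert.prems(2)[of "Ebas a"] unfolding supp_in_def Ebas_def by (auto simp: fun_eq_iff)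
  then have m: "m < 0" using Qf_Ebas[of "insert a V" a M] insert.hyps by (simp add: m_def)
  define M' where "M' = (\<lambda>u w. M u w - M u a * M a w / m)"
  have symM': "\<And>u w. M' u w = M' w u" unfolding M'_def using insert.prems(1) by (simp add: algebra_simps)
  have negM': "Qf V M' y < 0" if y: "supp_in V y" "y \<noteq> (\<lambda>_. 0)" for y
  proof -
    define S where "S = (\<Sum>b\<in>V. y b * M b a)"
    define t where "t = - S / m"
    define z where "z = y(a := t)"
    have zs: "supp_in (insert a V) z" using y unfolding supp_in_def z_def by auto
    obtain u where u: "y u \<noteq> 0" using y by auto
    then have uV: "u \<in> V" using y unfolding supp_in_def by auto
    then have "u \<noteq> a" using insert.hyps by auto
    then have "z u \<noteq> 0" using u unfolding z_def by simp
    then have znz: "z \<noteq> (\<lambda>_. 0)" by auto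
    have zV: "\<And>b. b \<in> V \<Longrightarrow> z b = y b" unfolding z_def using insert.hyps by auto
    have QzV: "Qf V M z = Qf V M y" unfolding Qf_def by (intro sum.cong refl) (simp add: zV)
    have s1: "(\<Sum>w\<in>V. z a * z w * M a w) = t * S"
      unfolding S_def sum_distrib_left
    proof (intro sum.cong refl)
      fix w assume "w \<in> V"
      then show "z a * z w * M a w = t * (y w * M w a)"
        using zV[of w] insert.prems(1)[of a w] by (simp add: z_def)
    qed
    have s2: "(\<Sum>u\<in>V. z u * z a * M u a) = t * S"
      unfolding S_def sum_distrib_left
    proof (intro sum.cong refl)
      fix w assume "w \<in> V"
      then show "z w * z a * M w a = t * (y w * M w a)"
        using zV[of w] by (simp add: z_def)
    qed
    have Qz: "Qf (insert a V) M z = t * t * m + 2 * t * S + Qf V M y"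
      using Qf_insert[OF insert.hyps, of M z] s1 s2 QzV by (simp add: z_def m_def)
    have QM': "Qf V M' y = Qf V M y - S * S / m"
    proof -
      have "Qf V M' y = (\<Sum>u\<in>V. \<Sum>w\<in>V. y u * y w * M u w - (y u * M u a) * (y w * M a w) / m)"
        unfolding Qf_def M'_def by (intro sum.cong refl) (simp add: right_diff_distrib)
      also have "\<dots> = Qf V M y - (\<Sum>u\<in>V. \<Sum>w\<in>V. (y u * M u a) * (y w * M a w) / m)"
        unfolding Qf_def by (simp add: sum_subtractf)
      also have "(\<Sum>u\<in>V. \<Sum>w\<in>V. (y u * M u a) * (y w * M a w) / m) = S * S / m"
      proof -
        have "(\<Sum>w\<in>V. y w * M a w) = S" unfolding S_def
          by (intro sum.cong refl) (metis insert.prems(1))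
        have "(\<Sum>u\<in>V. \<Sum>w\<in>V. (y u * M u a) * (y w * M a w) / m)
            = (\<Sum>u\<in>V. y u * M u a) * (\<Sum>w\<in>V. y w * M a w) / m"
          by (simp add: sum_divide_distrib[symmetric] sum_product)
        then show ?thesis using \<open>(\<Sum>w\<in>V. y w * M a w) = S\<close> unfolding S_def by simp
      qed
      finally show ?thesis .
    qed
    have "t * t * m + 2 * t * S = - (S * S / m)" unfolding t_def using m
      by (simp add: field_simps power2_eq_square)
    then have "Qf V M' y = Qf (insert a V) M z" using Qz QM' by simp
    also have "\<dots> < 0" using insert.prems(2)[OF zs znz] .
    finally show ?thesis .
  qed
  define c' where "c' = (\<lambda>u. c u - c a * M a u / m)"
  obtain y where y: "supp_in V y" "\<forall>u\<in>V. (\<Sum>b\<in>V. y b * M' b u) = c' u"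
    using insert.IH[of M' c'] symM' negM' by blast
  define S where "S = (\<Sum>b\<in>V. y b * M b a)"
  define t where "t = (c a - S) / m"
  define x where "x = y(a := t)"
  have xV: "\<And>b. b \<in> V \<Longrightarrow> x b = y b" unfolding x_def using insert.hyps by auto
  have xs: "supp_in (insert a V) x" using y(1) unfolding supp_in_def x_def by auto
  have sumx: "(\<Sum>b\<in>insert a V. x b * M b u) = t * M a u + (\<Sum>b\<in>V. y b * M b u)" for u
  proof -
    have "(\<Sum>b\<in>V. x b * M b u) = (\<Sum>b\<in>V. y b * M b u)" by (intro sum.cong refl) (simp add: xV)
    then show ?thesis using insert.hyps by (simp add: x_def)
  qed
  have "\<forall>u\<in>insert a V. (\<Sum>b\<in>insert a V. x b * M b u) = c u"
  proof
    fix u assume "u \<in> insert a V"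
    then consider "u = a" | "u \<in> V" by auto
    then show "(\<Sum>b\<in>insert a V. x b * M b u) = c u"
    proof cases
      case 1
      then show ?thesis unfolding sumx t_def S_def using m by (simp add: field_simps m_def)
    next
      case 2
      have "(\<Sum>b\<in>V. y b * M' b u) = (\<Sum>b\<in>V. y b * M b u) - S * M a u / m"
      proof -
        have "(\<Sum>b\<in>V. y b * M' b u) = (\<Sum>b\<in>V. y b * M b u - (y b * M b a) * M a u / m)"
          unfolding M'_def by (intro sum.cong refl) (simp add: right_diff_distrib)
        also have "\<dots> = (\<Sum>b\<in>V. y b * M b u) - (\<Sum>b\<in>V. (y b * M b a) * M a u / m)"
          by (simp add: sum_subtractf)
        also have "(\<Sum>b\<in>V. (y b * M b a) * M a u / m) = S * M a u / m"
          unfolding S_def by (simp add: sum_divide_distrib[symmetric] sum_distrib_right)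
        finally show ?thesis .
      qed
      then have "(\<Sum>b\<in>V. y b * M b u) = c u - c a * M a u / m + S * M a u / m"
        using y(2) 2 by (simp add: c'_def)
      then show ?thesis unfolding sumx t_def using m by (simp add: field_simps)
    qed
  qed
  then show ?case using xs by blast
qed

definition Mx :: "('v \<Rightarrow> 'v \<Rightarrow> bool) \<Rightarrow> ('v \<Rightarrow> int) \<Rightarrow> 'v \<Rightarrow> 'v \<Rightarrow> rat" where
  "Mx adj e u w = (if u = w then of_int (e u) else if adj u w then 1 else 0)"

definition pr :: "'v set \<Rightarrow> ('v \<Rightarrow> 'v \<Rightarrow> bool) \<Rightarrow> ('v \<Rightarrow> int) \<Rightarrow> ('v \<Rightarrow> rat) \<Rightarrow> 'v \<Rightarrow> rat" where
  "pr V adj e x u = (\<Sum>a\<in>V. x a * Mx adj e a u)"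

lemma inter_Ebas:
  assumes "finite V" "u \<in> V"
  shows "inter V adj e x (Ebas u) = pr V adj e x u"
  unfolding inter_def pr_def
proof (intro sum.cong refl)
  fix a assume "a \<in> V"
  have "(\<Sum>w\<in>V. x a * Ebas u w * (if a = w then rat_of_int (e a) else if adj a w then 1 else 0))
     = (\<Sum>w\<in>V. if w = u then x a * Mx adj e a u else 0)"
    by (rule sum.cong) (auto simp: Ebas_def Mx_def)
  then show "(\<Sum>w\<in>V. x a * Ebas u w * (if a = w then rat_of_int (e a) else if adj a w then 1 else 0))
      = x a * Mx adj e a u" using assms by simp
qed

lemma inter_Qf: "inter V adj e x x = Qf V (Mx adj e) x"
  unfolding inter_def Qf_def Mx_def by simp

lemma inter_pr: "inter V adj e x x = (\<Sum>w\<in>V. x w * pr V adj e x w)"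
  unfolding inter_def pr_def Mx_def
  by (subst sum.swap) (simp add: sum_distrib_left mult_ac)

lemma pr_diff: "pr V adj e (x - y) u = pr V adj e x u - pr V adj e y u"
  unfolding pr_def by (simp add: sum_subtractf left_diff_distrib)

lemma dt_finite: "decorated_tree V adj e \<Longrightarrow> finite V"
  unfolding decorated_tree_def by simp
lemma dt_sym: "decorated_tree V adj e \<Longrightarrow> adj u w \<Longrightarrow> adj w u"
  unfolding decorated_tree_def by blast
lemma dt_irr: "decorated_tree V adj e \<Longrightarrow> \<not> adj u u"
  unfolding decorated_tree_def by blast
lemma dt_in: "decorated_tree V adj e \<Longrightarrow> adj u w \<Longrightarrow> u \<in> V \<and> w \<in> V"
  unfolding decorated_tree_def by blast
lemma dt_neg: "decorated_tree V adj e \<Longrightarrow> supp_in V x \<Longrightarrow> x \<noteq> (\<lambda>_. 0) \<Longrightarrow> inter V adj e x x < 0"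
  unfolding decorated_tree_def by blast

lemma dt_exist:
  assumes "decorated_tree V adj e"
  shows "\<exists>x. supp_in V x \<and> (\<forall>u\<in>V. pr V adj e x u = c u)"
proof -
  have "\<exists>x. supp_in V x \<and> (\<forall>u\<in>V. (\<Sum>b\<in>V. x b * Mx adj e b u) = c u)"
  proof (rule solve_sym)
    show "finite V" using dt_finite[OF assms] .
    show "Mx adj e u w = Mx adj e w u" for u w
      unfolding Mx_def using dt_sym[OF assms] by auto
    show "Qf V (Mx adj e) x < 0" if "supp_in V x" "x \<noteq> (\<lambda>_. 0)" for x
      using dt_neg[OF assms that] by (simp add: inter_Qf)
  qed
  then show ?thesis unfolding pr_def .
qed

lemma dt_uniq:
  assumes "decorated_tree V adj e" "supp_in V x" "supp_in V y"
    "\<And>u. u \<in> V \<Longrightarrow> pr V adj e x u = pr V adj e y u"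
  shows "x = y"
proof (rule ccontr)
  assume ne: "x \<noteq> y"
  define d where "d = x - y"
  have ds: "supp_in V d" using assms(2,3) unfolding supp_in_def d_def by simp
  have dnz: "d \<noteq> (\<lambda>_. 0)" using ne unfolding d_def by (auto simp: fun_eq_iff)
  have "inter V adj e d d = (\<Sum>w\<in>V. d w * pr V adj e d w)" by (rule inter_pr)
  also have "\<dots> = 0" unfolding d_def pr_diff using assms(4) by simp
  finally show False using dt_neg[OF assms(1) ds dnz] by simp
qed

lemma dt_char:
  assumes "decorated_tree V adj e"
  shows "supp_in V (THE x. supp_in V x \<and> (\<forall>w\<in>V. inter V adj e x (Ebas w) = c w)) \<and>
     (\<forall>w\<in>V. pr V adj e (THE x. supp_in V x \<and> (\<forall>w\<in>V. inter V adj e x (Ebas w) = c w)) w = c w)"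
proof -
  have fin: "finite V" using dt_finite[OF assms] .
  have eq: "(supp_in V x \<and> (\<forall>w\<in>V. inter V adj e x (Ebas w) = c w)) \<longleftrightarrow>
        (supp_in V x \<and> (\<forall>w\<in>V. pr V adj e x w = c w))" for x
    using inter_Ebas[OF fin] by auto
  have "\<exists>!x. supp_in V x \<and> (\<forall>w\<in>V. inter V adj e x (Ebas w) = c w)"
  proof -
    obtain x where x: "supp_in V x" "\<forall>u\<in>V. pr V adj e x u = c u" using dt_exist[OF assms] by blast
    show ?thesis
    proof (rule ex1I[of _ x])
      show "supp_in V x \<and> (\<forall>w\<in>V. inter V adj e x (Ebas w) = c w)" using x eq by blast
      fix y assume "supp_in V y \<and> (\<forall>w\<in>V. inter V adj e y (Ebas w) = c w)"
      then have "supp_in V y" "\<forall>w\<in>V. pr V adj e y w = c w" using eq by blast+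
      then show "y = x" using dt_uniq[OF assms] x by metis
    qed
  qed
  from theI'[OF this] show ?thesis using eq by blast
qed

lemma Estar_prop:
  assumes "decorated_tree V adj e"
  shows "supp_in V (Estar V adj e v)"
    "\<And>w. w \<in> V \<Longrightarrow> pr V adj e (Estar V adj e v) w = (if v = w then -1 else 0)"
  using dt_char[OF assms, of "\<lambda>w. if v = w then -1 else 0"] unfolding Estar_def by auto

lemma ZK_prop:
  assumes "decorated_tree V adj e"
  shows "supp_in V (ZK V adj e)"
    "\<And>w. w \<in> V \<Longrightarrow> pr V adj e (ZK V adj e) w = of_int (e w) + 2"
  using dt_char[OF assms, of "\<lambda>w. of_int (e w) + 2"] unfolding ZK_def by auto

definition comb :: "'v set \<Rightarrow> ('v \<Rightarrow> 'v \<Rightarrow> bool) \<Rightarrow> ('v \<Rightarrow> int) \<Rightarrow> ('v \<Rightarrow> nat) \<Rightarrow> 'v \<Rightarrow> rat" where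
  "comb V adj e k = (\<lambda>u. \<Sum>v\<in>V. of_nat (k v) * Estar V adj e v u)"

lemma comb_supp:
  assumes "decorated_tree V adj e"
  shows "supp_in V (comb V adj e k)"
  using Estar_prop(1)[OF assms] unfolding supp_in_def comb_def by simp

lemma comb_pr:
  assumes "decorated_tree V adj e" "w \<in> V"
  shows "pr V adj e (comb V adj e k) w = - of_nat (k w)"
proof -
  have fin: "finite V" using dt_finite[OF assms(1)] .
  have "pr V adj e (comb V adj e k) w = (\<Sum>v\<in>V. of_nat (k v) * pr V adj e (Estar V adj e v) w)"
    unfolding pr_def comb_def sum_distrib_right
    by (subst sum.swap) (simp add: sum_distrib_left mult_ac)
  also have "\<dots> = (\<Sum>v\<in>V. if v = w then - of_nat (k w) else 0)"
    by (intro sum.cong refl) (simp add: Estar_prop(2)[OF assms(1)] assms(2))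
  also have "\<dots> = - of_nat (k w)" using fin assms(2) by simp
  finally show ?thesis .
qed

lemma zcoef_Z1:
  assumes dt: "decorated_tree V adj e" and s: "supp_in V l"
    and k: "\<And>w. w \<in> V \<Longrightarrow> - pr V adj e l w = of_nat (k w)"
  shows "zcoef V adj e l = (\<Prod>v\<in>V. taylor_coeff (int (valency V adj v) - 2) (k v))"
proof -
  define k0 where "k0 = (\<lambda>u. if u \<in> V then k u else 0)"
  have set: "{k. (\<forall>u. u \<notin> V \<longrightarrow> k u = 0) \<and>
        (\<lambda>u. \<Sum>v\<in>V. of_nat (k v) * Estar V adj e v u) = l} = {k0}"
  proof (intro set_eqI iffI)
    fix k' assume "k' \<in> {k. (\<forall>u. u \<notin> V \<longrightarrow> k u = 0) \<and>
        (\<lambda>u. \<Sum>v\<in>V. of_nat (k v) * Estar V adj e v u) = l}"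
    then have k': "\<forall>u. u \<notin> V \<longrightarrow> k' u = 0" "comb V adj e k' = l" unfolding comb_def by auto
    have "k' u = k0 u" for u
    proof (cases "u \<in> V")
      case True
      have "- pr V adj e l u = of_nat (k' u)" using comb_pr[OF dt True, of k'] k'(2) by simp
      then show ?thesis using k[OF True] True unfolding k0_def by simp
    next
      case False then show ?thesis using k' unfolding k0_def by simp
    qed
    then show "k' \<in> {k0}" by auto
  next
    fix k' assume "k' \<in> {k0}"
    then have kk: "k' = k0" by simp
    have "comb V adj e k0 = l"
    proof (rule dt_uniq[OF dt comb_supp[OF dt] s])
      fix u assume u: "u \<in> V"
      show "pr V adj e (comb V adj e k0) u = pr V adj e l u"
        using comb_pr[OF dt u, of k0] k[OF u] u unfolding k0_def by simp
    qed
    then show "k' \<in> {k. (\<forall>u. u \<notin> V \<longrightarrow> k u = 0) \<and>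
        (\<lambda>u. \<Sum>v\<in>V. of_nat (k v) * Estar V adj e v u) = l}"
      using kk unfolding comb_def k0_def by auto
  qed
  show ?thesis unfolding zcoef_def set
    by (simp add: k0_def cong: prod.cong)
qed

lemma zcoef_Z2:
  assumes dt: "decorated_tree V adj e" and nz: "zcoef V adj e l \<noteq> 0"
  shows "supp_in V l \<and> (\<exists>k. \<forall>w\<in>V. - pr V adj e l w = of_nat (k w))"
proof -
  have "{k. (\<forall>u. u \<notin> V \<longrightarrow> k u = 0) \<and>
        (\<lambda>u. \<Sum>v\<in>V. of_nat (k v) * Estar V adj e v u) = l} \<noteq> {}"
    using nz unfolding zcoef_def by (metis sum.empty)
  then obtain k where "(\<lambda>u. \<Sum>v\<in>V. of_nat (k v) * Estar V adj e v u) = l" by blast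
  then have l: "l = comb V adj e k" unfolding comb_def by simp
  show ?thesis unfolding l using comb_supp[OF dt] comb_pr[OF dt] by auto
qed

lemma pr_EG:
  assumes dt: "decorated_tree V adj e" and u: "u \<in> V"
  shows "pr V adj e (EG V) u = of_int (e u) + of_nat (valency V adj u)"
proof -
  have fin: "finite V" using dt_finite[OF dt] .
  have "pr V adj e (EG V) u = (\<Sum>a\<in>V. (if a = u then of_int (e u) else 0) + of_bool (adj a u))"
    unfolding pr_def EG_def Mx_def by (intro sum.cong refl) (auto simp: dt_irr[OF dt])
  also have "\<dots> = of_int (e u) + of_nat (card (V \<inter> {a. adj a u}))"
    using fin u by (simp add: sum.distrib)
  also have "V \<inter> {a. adj a u} = {w\<in>V. adj u w}" using dt_sym[OF dt] by blast
  finally show ?thesis unfolding valency_def by simp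
qed

lemma pr_D:
  assumes dt: "decorated_tree V adj e" and u: "u \<in> V"
  shows "pr V adj e (ZK V adj e - EG V) u = 2 - of_nat (valency V adj u)"
  unfolding pr_diff using ZK_prop(2)[OF dt u] pr_EG[OF dt u] by simp

lemma pr_restrict:
  assumes "\<And>u. u \<in> V \<Longrightarrow> x u = y u"
  shows "pr V adj e x w = pr V adj e y w"
  unfolding pr_def using assms by (intro sum.cong refl) simp

locale setting =
  fixes V W :: "'v set" and adj adjn :: "'v \<Rightarrow> 'v \<Rightarrow> bool"
    and e en :: "'v \<Rightarrow> int" and v0 :: 'v
  assumes dt: "decorated_tree V adj e"
    and v0: "v0 \<in> V" "valency V adj v0 = 1"
    and W: "finite W" "W \<noteq> {}" "W \<inter> V = {}"
    and adjn: "\<And>u w. adjn u w \<longleftrightarrow>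
         (u \<in> V \<and> w \<in> V \<and> adj u w) \<or> (u = v0 \<and> w \<in> W) \<or> (u \<in> W \<and> w = v0)"
    and en: "\<And>u. u \<in> V \<Longrightarrow> en u = e u"
begin

lemma finV: "finite V" using dt_finite[OF dt] .

lemma P1:
  assumes u: "u \<in> V"
  shows "pr (V \<union> W) adjn en x u = pr V adj e x u + (if u = v0 then (\<Sum>a\<in>W. x a) else 0)"
proof -
  have "pr (V \<union> W) adjn en x u = (\<Sum>a\<in>V. x a * Mx adjn en a u) + (\<Sum>a\<in>W. x a * Mx adjn en a u)"
    unfolding pr_def using finV W by (intro sum.union_disjoint) auto
  also have "(\<Sum>a\<in>V. x a * Mx adjn en a u) = pr V adj e x u"
    unfolding pr_def
  proof (intro sum.cong refl)
    fix a assume a: "a \<in> V"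
    have "adjn a u \<longleftrightarrow> adj a u" using adjn[of a u] a u W(3) dt_in[OF dt] by blast
    then show "x a * Mx adjn en a u = x a * Mx adj e a u"
      unfolding Mx_def using en[OF a] by auto
  qed
  also have "(\<Sum>a\<in>W. x a * Mx adjn en a u) = (if u = v0 then (\<Sum>a\<in>W. x a) else 0)"
  proof -
    have "(\<Sum>a\<in>W. x a * Mx adjn en a u) = (\<Sum>a\<in>W. if u = v0 then x a else 0)"
    proof (intro sum.cong refl)
      fix a assume a: "a \<in> W"
      have "a \<noteq> u" using a u W(3) by blast
      moreover have "adjn a u \<longleftrightarrow> u = v0" using adjn[of a u] a u W(3) v0 by blast
      ultimately show "x a * Mx adjn en a u = (if u = v0 then x a else 0)"
        unfolding Mx_def by simp
    qed
    then show ?thesis by simp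
  qed
  finally show ?thesis .
qed

lemma P2:
  assumes w: "w \<in> W"
  shows "pr (V \<union> W) adjn en x w = x v0 + of_int (en w) * x w"
proof -
  have "pr (V \<union> W) adjn en x w = (\<Sum>a\<in>V. x a * Mx adjn en a w) + (\<Sum>a\<in>W. x a * Mx adjn en a w)"
    unfolding pr_def using finV W by (intro sum.union_disjoint) auto
  also have "(\<Sum>a\<in>V. x a * Mx adjn en a w) = (\<Sum>a\<in>V. if a = v0 then x a else 0)"
  proof (intro sum.cong refl)
    fix a assume a: "a \<in> V"
    have "a \<noteq> w" using a w W(3) by blast
    moreover have "adjn a w \<longleftrightarrow> a = v0" using adjn[of a w] a w W(3) v0 by blast
    ultimately show "x a * Mx adjn en a w = (if a = v0 then x a else 0)"
      unfolding Mx_def by simp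
  qed
  also have "\<dots> = x v0" using finV v0 by simp
  also have "(\<Sum>a\<in>W. x a * Mx adjn en a w) = (\<Sum>a\<in>W. if a = w then x a * of_int (en w) else 0)"
  proof (intro sum.cong refl)
    fix a assume a: "a \<in> W"
    have "\<not> adjn a w" using adjn[of a w] a w W(3) v0 by blast
    then show "x a * Mx adjn en a w = (if a = w then x a * of_int (en w) else 0)"
      unfolding Mx_def by simp
  qed
  also have "\<dots> = x w * of_int (en w)" using W(1) w by simp
  finally show ?thesis by simp
qed

lemma V1:
  assumes "u \<in> V" "u \<noteq> v0"
  shows "valency (V \<union> W) adjn u = valency V adj u"
proof -
  have "{w \<in> V \<union> W. adjn u w} = {w\<in>V. adj u w}"
    using assms adjn W(3) dt_in[OF dt] by blast
  then show ?thesis unfolding valency_def by simp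
qed

lemma V2: "valency (V \<union> W) adjn v0 = 1 + card W"
proof -
  have "{w \<in> V \<union> W. adjn v0 w} = {w\<in>V. adj v0 w} \<union> W"
    using v0 adjn W(3) dt_in[OF dt] by blast
  moreover have "card ({w\<in>V. adj v0 w} \<union> W) = card {w\<in>V. adj v0 w} + card W"
    using finV W by (intro card_Un_disjoint) auto
  ultimately show ?thesis using v0(2) unfolding valency_def by simp
qed

lemma V3:
  assumes "w \<in> W"
  shows "valency (V \<union> W) adjn w = 1"
proof -
  have "{x \<in> V \<union> W. adjn w x} = {v0}"
    using assms v0 adjn W(3) by blast
  then show ?thesis unfolding valency_def by simp
qed

end

lemma tc_m1: "taylor_coeff (-1) j = 1"
  by (simp add: taylor_coeff_def)

lemma tc_pos:
  assumes "s \<ge> 1"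
  shows "taylor_coeff (int (1 + s) - 2) j = (-1)^j * int ((s - 1) choose j)"
proof -
  have "int (1 + s) - 2 \<ge> 0" using assms by simp
  moreover have "nat (int (1 + s) - 2) = s - 1" using assms by simp
  ultimately show ?thesis unfolding taylor_coeff_def by simp
qed

lemma div_bound:
  fixes a c y :: int
  assumes "c > 0"
  shows "a - c * (a div c) \<ge> 0" "c * y \<le> a \<Longrightarrow> y \<le> a div c"
proof -
  show "a - c * (a div c) \<ge> 0" using assms
    by (simp add: minus_mult_div_eq_mod)
  show "c * y \<le> a \<Longrightarrow> y \<le> a div c" using assms
    using zdiv_mono1 by fastforce
qed

theorem mainTheorem6:
  fixes V W :: "'v set" and adj adjn :: "'v \<Rightarrow> 'v \<Rightarrow> bool"
    and e en :: "'v \<Rightarrow> int" and v0 :: 'v and lc :: "'v \<Rightarrow> rat"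
  assumes ell: "elliptic V adj e"
    and v0: "v0 \<in> V" "valency V adj v0 = 1"
    and W: "finite W" "W \<noteq> {}" "W \<inter> V = {}"
    and adjn: "\<And>u w. adjn u w \<longleftrightarrow>
         (u \<in> V \<and> w \<in> V \<and> adj u w) \<or> (u = v0 \<and> w \<in> W) \<or> (u \<in> W \<and> w = v0)"
    and en: "\<And>u. u \<in> V \<Longrightarrow> en u = e u"
    and elln: "elliptic (V \<union> W) adjn en"
    and lc: "lc \<in> supp_dual V adj e"
    and ne: "{x \<in> supp_dual (V \<union> W) adjn en. proj_dual V adj e (V \<union> W) adjn en x = lc} \<noteq> {}"
  shows "finite {x \<in> supp_dual (V \<union> W) adjn en. proj_dual V adj e (V \<union> W) adjn en x = lc}
     \<and> (\<Sum>x\<in>{x \<in> supp_dual (V \<union> W) adjn en. proj_dual V adj e (V \<union> W) adjn en x = lc}.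
           zcoef (V \<union> W) adjn en x) = zcoef V adj e lc"
proof -
  have dt: "decorated_tree V adj e" using ell unfolding elliptic_def by simp
  have dtn: "decorated_tree (V \<union> W) adjn en" using elln unfolding elliptic_def by simp
  have enle: "\<And>w. w \<in> W \<Longrightarrow> en w \<le> -2" using elln unfolding elliptic_def by simp
  interpret S: setting V W adj adjn e en v0
    using dt v0 W adjn en by (simp add: setting_def)
  have finV: "finite V" by (rule S.finV)
  define D where "D = ZK V adj e - EG V"
  define Dn where "Dn = ZK (V \<union> W) adjn en - EG (V \<union> W)"
  obtain l where lc_eq: "lc = D - l" and lL: "in_L V l" and lns: "\<not> strict_neg V l"
      and zlc: "zcoef V adj e lc \<noteq> 0"
    using lc unfolding supp_dual_def D_def[symmetric] by blast
  obtain k' where k': "\<And>w. w \<in> V \<Longrightarrow> - pr V adj e lc w = of_nat (k' w)"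
    using zcoef_Z2[OF dt zlc] by blast
  have lcs: "supp_in V lc" using zcoef_Z2[OF dt zlc] by blast
  define R where "R = (\<Prod>v\<in>V-{v0}. taylor_coeff (int (valency V adj v) - 2) (k' v))"
  have zR: "zcoef V adj e lc = R"
  proof -
    have "zcoef V adj e lc = (\<Prod>v\<in>V. taylor_coeff (int (valency V adj v) - 2) (k' v))"
      by (rule zcoef_Z1[OF dt lcs k'])
    also have "\<dots> = taylor_coeff (int (valency V adj v0) - 2) (k' v0) * R"
      unfolding R_def using finV v0(1) by (rule prod.remove)
    finally show ?thesis using v0(2) tc_m1 by simp
  qed
  have ls: "supp_in V l" and lint: "\<And>u. u \<in> V \<Longrightarrow> l u \<in> \<int>" using lL unfolding in_L_def by auto
  obtain la where la: "l v0 = of_int la" using lint[OF v0(1)] by (auto elim: Ints_cases)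
  have prl: "\<And>u. u \<in> V \<Longrightarrow> of_nat (k' u) = of_nat (valency V adj u) - 2 + pr V adj e l u"
  proof -
    fix u assume u: "u \<in> V"
    have "of_nat (k' u) = - pr V adj e lc u" using k'[OF u] by simp
    also have "\<dots> = - pr V adj e D u + pr V adj e l u" unfolding lc_eq pr_diff by simp
    also have "\<dots> = of_nat (valency V adj u) - 2 + pr V adj e l u"
      unfolding D_def pr_D[OF dt u] by simp
    finally show "of_nat (k' u) = of_nat (valency V adj u) - 2 + pr V adj e l u" .
  qed
  define s where "s = card W"
  have s1: "s \<ge> 1" using W unfolding s_def by (simp add: Suc_leI card_gt_0_iff)
  define c where "c = (\<lambda>w. - en w)"
  have cpos: "\<And>w. w \<in> W \<Longrightarrow> c w > 0" using enle unfolding c_def by fastforce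
  define Y where "Y = (\<lambda>w. (la - 1) div c w)"
  define J0 where "J0 = int s + int (k' v0) + (\<Sum>w\<in>W. Y w)"
  have gen: "(\<forall>u\<in>V-{v0}. - pr (V \<union> W) adjn en (Dn - L) u = of_nat (k' u)) \<and>
     - pr (V \<union> W) adjn en (Dn - L) v0 = of_int (int s + int (k' v0)) + (\<Sum>a\<in>W. L a) \<and>
     (\<forall>w\<in>W. - pr (V \<union> W) adjn en (Dn - L) w = of_int (la - 1) + of_int (en w) * L w)"
    if LV: "\<And>u. u \<in> V \<Longrightarrow> L u = l u" for L
  proof (intro conjI ballI)
    have prLl: "pr V adj e L u = pr V adj e l u" for u by (rule pr_restrict) (simp add: LV)
    fix u assume u: "u \<in> V - {v0}"
    then have uV: "u \<in> V \<union> W" by simp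
    have "- pr (V \<union> W) adjn en (Dn - L) u = - pr (V \<union> W) adjn en Dn u + pr (V \<union> W) adjn en L u"
      by (simp add: pr_diff)
    also have "\<dots> = of_nat (valency V adj u) - 2 + pr V adj e l u"
    proof -
      have "pr (V \<union> W) adjn en L u = pr V adj e l u" using S.P1[of u L] u prLl by simp
      moreover have "pr (V \<union> W) adjn en Dn u = 2 - of_nat (valency V adj u)"
        using u pr_D[OF dtn uV] S.V1[of u] unfolding Dn_def by simp
      ultimately show ?thesis by simp
    qed
    also have "\<dots> = of_nat (k' u)" using prl u by simp
    finally show "- pr (V \<union> W) adjn en (Dn - L) u = of_nat (k' u)" .
  next
    have prLl: "pr V adj e L u = pr V adj e l u" for u by (rule pr_restrict) (simp add: LV)
    have uV: "v0 \<in> V \<union> W" using v0 by simp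
    have "- pr (V \<union> W) adjn en (Dn - L) v0 = - pr (V \<union> W) adjn en Dn v0 + pr (V \<union> W) adjn en L v0"
      by (simp add: pr_diff)
    also have "\<dots> = of_nat (1 + s) - 2 + pr V adj e l v0 + (\<Sum>a\<in>W. L a)"
    proof -
      have "pr (V \<union> W) adjn en L v0 = pr V adj e l v0 + (\<Sum>a\<in>W. L a)"
        using S.P1[of v0 L] v0(1) prLl by simp
      moreover have "pr (V \<union> W) adjn en Dn v0 = 2 - of_nat (1 + s)"
        using pr_D[OF dtn uV] S.V2 unfolding Dn_def s_def by simp
      ultimately show ?thesis by simp
    qed
    also have "\<dots> = of_int (int s + int (k' v0)) + (\<Sum>a\<in>W. L a)"
      using prl[OF v0(1)] v0(2) by simp
    finally show "- pr (V \<union> W) adjn en (Dn - L) v0 = of_int (int s + int (k' v0)) + (\<Sum>a\<in>W. L a)" .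
  next
    fix w assume w: "w \<in> W"
    then have wV: "w \<in> V \<union> W" by simp
    have "- pr (V \<union> W) adjn en (Dn - L) w = - pr (V \<union> W) adjn en Dn w + pr (V \<union> W) adjn en L w"
      by (simp add: pr_diff)
    also have "\<dots> = of_int (la - 1) + of_int (en w) * L w"
    proof -
      have "pr (V \<union> W) adjn en L w = of_int la + of_int (en w) * L w"
        using S.P2[OF w, of L] LV[OF v0(1)] la by simp
      moreover have "pr (V \<union> W) adjn en Dn w = 1"
        using pr_D[OF dtn wV] S.V3[OF w] unfolding Dn_def by simp
      ultimately show ?thesis by simp
    qed
    finally show "- pr (V \<union> W) adjn en (Dn - L) w = of_int (la - 1) + of_int (en w) * L w" .
  qed
  have Dns: "supp_in (V \<union> W) Dn"
    using ZK_prop(1)[OF dtn] unfolding Dn_def supp_in_def EG_def by simp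
  define Lf where "Lf = (\<lambda>n u. if u \<in> V then l u else if u \<in> W then of_int (Y u - int (n u)) else (0::rat))"
  define X where "X = (\<lambda>n. Dn - Lf n)"
  have LfV: "\<And>n u. u \<in> V \<Longrightarrow> Lf n u = l u" unfolding Lf_def by simp
  have LfW: "\<And>n u. u \<in> W \<Longrightarrow> Lf n u = of_int (Y u - int (n u))" unfolding Lf_def using W(3) by auto
  have fromPi: "J0 \<ge> 0 \<and> (\<exists>n\<in>Bset W (nat J0). x = X n)"
    if xP: "x \<in> supp_dual (V \<union> W) adjn en" and xp: "proj_dual V adj e (V \<union> W) adjn en x = lc" for x
  proof -
    obtain L' where xL: "x = Dn - L'" and L'L: "in_L (V \<union> W) L'" and zx: "zcoef (V \<union> W) adjn en x \<noteq> 0"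
      using xP unfolding supp_dual_def Dn_def[symmetric] by blast
    obtain kn where kn: "\<And>u. u \<in> V \<union> W \<Longrightarrow> - pr (V \<union> W) adjn en x u = of_nat (kn u)"
      using zcoef_Z2[OF dtn zx] by blast
    have L'V: "L' u = l u" if u: "u \<in> V" for u
    proof -
      have "lc u = D u - (Dn u - x u)"
        using fun_cong[OF xp, of u] u unfolding proj_dual_def restr_def D_def Dn_def by simp
      moreover have "x u = Dn u - L' u" using xL by simp
      ultimately show ?thesis using lc_eq by simp
    qed
    have L's: "supp_in (V \<union> W) L'" and L'int: "\<And>u. u \<in> V \<union> W \<Longrightarrow> L' u \<in> \<int>"
      using L'L unfolding in_L_def by auto
    define y where "y = (\<lambda>u. \<lfloor>L' u\<rfloor>)"
    have Ly: "\<And>w. w \<in> W \<Longrightarrow> L' w = of_int (y w)" unfolding y_def using L'int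
      by (metis Un_iff floor_of_int Ints_cases)
    have G: "(\<forall>u\<in>V-{v0}. - pr (V \<union> W) adjn en (Dn - L') u = of_nat (k' u)) \<and>
       - pr (V \<union> W) adjn en (Dn - L') v0 = of_int (int s + int (k' v0)) + (\<Sum>a\<in>W. L' a) \<and>
       (\<forall>w\<in>W. - pr (V \<union> W) adjn en (Dn - L') w = of_int (la - 1) + of_int (en w) * L' w)"
      by (rule gen) (rule L'V)
    have yY: "y w \<le> Y w" if w: "w \<in> W" for w
    proof -
      have "(0::rat) \<le> of_nat (kn w)" by simp
      also have "of_nat (kn w) = of_int (la - 1) + of_int (en w) * L' w"
        using kn[of w] G w xL by simp
      also have "\<dots> = of_int (la - 1 - c w * y w)" using Ly[OF w] unfolding c_def by simp
      finally have "c w * y w \<le> la - 1" by linarith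
      then show ?thesis unfolding Y_def by (rule div_bound(2)[OF cpos[OF w]])
    qed
    define n where "n = (\<lambda>u. if u \<in> W then nat (Y u - y u) else 0)"
    have nW: "\<And>w. w \<in> W \<Longrightarrow> int (n w) = Y w - y w" unfolding n_def using yY by simp
    have sumn: "int (sum n W) = (\<Sum>w\<in>W. Y w) - (\<Sum>w\<in>W. y w)"
      by (simp add: of_nat_sum nW sum_subtractf)
    have "(0::rat) \<le> of_nat (kn v0)" by simp
    also have "of_nat (kn v0) = of_int (int s + int (k' v0)) + (\<Sum>a\<in>W. L' a)"
      using kn[of v0] G v0(1) xL by simp
    also have "\<dots> = of_int (int s + int (k' v0) + (\<Sum>a\<in>W. y a))"
      by (simp add: Ly)
    finally have "0 \<le> int s + int (k' v0) + (\<Sum>a\<in>W. y a)" by linarith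
    then have le: "int (sum n W) \<le> J0" unfolding J0_def sumn by simp
    then have J0: "J0 \<ge> 0" by linarith
    have "sum n W \<le> nat J0"
    proof -
      have "nat (int (sum n W)) \<le> nat J0" by (rule nat_mono[OF le])
      then show ?thesis by (simp only: nat_int)
    qed
    then have nB: "n \<in> Bset W (nat J0)" unfolding Bset_def n_def by auto
    have "L' = Lf n"
    proof
      fix u show "L' u = Lf n u"
      proof (cases "u \<in> V")
        case True then show ?thesis using L'V LfV by simp
      next
        case False
        show ?thesis
        proof (cases "u \<in> W")
          case True
          have "Lf n u = of_int (Y u - int (n u))" by (rule LfW[OF True])
          also have "\<dots> = of_int (y u)" using nW[OF True] by simp
          finally show ?thesis using Ly[OF True] by simp
        next
          case False
          then show ?thesis using \<open>u \<notin> V\<close> L's unfolding supp_in_def Lf_def by simp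
        qed
      qed
    qed
    then have "x = X n" unfolding X_def xL by simp
    then show ?thesis using J0 nB by blast
  qed
  have Lfs: "supp_in (V \<union> W) (Lf n)" for n unfolding supp_in_def Lf_def by simp
  have Xs: "supp_in (V \<union> W) (X n)" for n using Dns Lfs unfolding supp_in_def X_def by simp
  have Xproj: "proj_dual V adj e (V \<union> W) adjn en (X n) = lc" for n
  proof
    fix u
    have "proj_dual V adj e (V \<union> W) adjn en (X n) u = D u - (if u \<in> V then Lf n u else 0)"
      unfolding proj_dual_def restr_def D_def Dn_def X_def by simp
    also have "\<dots> = D u - l u" using ls LfV unfolding supp_in_def by auto
    finally show "proj_dual V adj e (V \<union> W) adjn en (X n) u = lc u" unfolding lc_eq by simp
  qed
  have Xsupp: "X n \<in> supp_dual (V \<union> W) adjn en" if "zcoef (V \<union> W) adjn en (X n) \<noteq> 0" for n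
  proof -
    have "in_L (V \<union> W) (Lf n)"
      unfolding in_L_def using Lfs lint unfolding Lf_def by auto
    moreover have "\<not> strict_neg (V \<union> W) (Lf n)"
    proof
      assume "strict_neg (V \<union> W) (Lf n)"
      then have "\<forall>u\<in>V. l u < 0" using LfV unfolding strict_neg_def by (metis UnI1)
      then show False using lns unfolding strict_neg_def by simp
    qed
    ultimately show ?thesis unfolding supp_dual_def using that unfolding X_def Dn_def by blast
  qed
  have Xinj: "inj_on X (Bset W (nat J0))"
  proof
    fix n n' assume n: "n \<in> Bset W (nat J0)" and n': "n' \<in> Bset W (nat J0)" and eq: "X n = X n'"
    show "n = n'"
    proof
      fix u show "n u = n' u"
      proof (cases "u \<in> W")
        case True
        have "Dn u - Lf n u = Dn u - Lf n' u" using fun_cong[OF eq, of u] unfolding X_def by simp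
        then have "Lf n u = Lf n' u" by simp
        then show ?thesis using LfW[OF True] by simp
      next
        case False then show ?thesis using n n' unfolding Bset_def by auto
      qed
    qed
  qed
  have Xn: "zcoef (V \<union> W) adjn en (X n) =
      R * ((-1)^(nat J0 - sum n W) * int ((s - 1) choose (nat J0 - sum n W)))"
    if nB: "n \<in> Bset W (nat J0)" and J0: "J0 \<ge> 0" for n
  proof -
    have G: "(\<forall>u\<in>V-{v0}. - pr (V \<union> W) adjn en (Dn - Lf n) u = of_nat (k' u)) \<and>
       - pr (V \<union> W) adjn en (Dn - Lf n) v0 = of_int (int s + int (k' v0)) + (\<Sum>a\<in>W. Lf n a) \<and>
       (\<forall>w\<in>W. - pr (V \<union> W) adjn en (Dn - Lf n) w = of_int (la - 1) + of_int (en w) * Lf n w)"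
      by (rule gen) (rule LfV)
    have G1: "\<And>u. u \<in> V - {v0} \<Longrightarrow> - pr (V \<union> W) adjn en (X n) u = of_nat (k' u)"
      unfolding X_def by (rule bspec[OF conjunct1[OF G]])
    have G2: "- pr (V \<union> W) adjn en (X n) v0 = of_int (int s + int (k' v0)) + (\<Sum>a\<in>W. Lf n a)"
      unfolding X_def by (rule conjunct1[OF conjunct2[OF G]])
    have G3: "\<And>w. w \<in> W \<Longrightarrow> - pr (V \<union> W) adjn en (X n) w = of_int (la - 1) + of_int (en w) * Lf n w"
      unfolding X_def by (rule bspec[OF conjunct2[OF conjunct2[OF G]]])
    have sle: "sum n W \<le> nat J0" using nB unfolding Bset_def by simp
    define kk where "kk = (\<lambda>u. if u \<in> V - {v0} then k' u else if u = v0 then nat J0 - sum n W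
        else if u \<in> W then nat ((la - 1) + en u * (Y u - int (n u))) else 0)"
    have kkpr: "- pr (V \<union> W) adjn en (X n) u = of_nat (kk u)" if u: "u \<in> V \<union> W" for u
    proof -
      consider "u \<in> V - {v0}" | "u = v0" | "u \<in> W" using u by auto
      then show ?thesis
      proof cases
        case 1
        have "kk u = k' u" using 1 unfolding kk_def by simp
        then show ?thesis using G1[OF 1] by simp
      next
        case 2
        have sW: "(\<Sum>a\<in>W. Lf n a) = of_int ((\<Sum>a\<in>W. Y a) - int (sum n W))"
        proof -
          have "(\<Sum>a\<in>W. Lf n a) = (\<Sum>a\<in>W. of_int (Y a - int (n a)))"
            by (intro sum.cong refl) (rule LfW)
          also have "\<dots> = of_int (\<Sum>a\<in>W. Y a - int (n a))" by (simp only: of_int_sum)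
          also have "(\<Sum>a\<in>W. Y a - int (n a)) = (\<Sum>a\<in>W. Y a) - int (sum n W)"
            by (simp add: sum_subtractf of_nat_sum)
          finally show ?thesis .
        qed
        have "int (nat J0 - sum n W) = J0 - int (sum n W)" using sle J0 by simp
        then have "(of_int (int (nat J0 - sum n W)) :: rat) = of_int (J0 - int (sum n W))"
          by (simp only:)
        then have "(of_nat (nat J0 - sum n W) :: rat) = of_int (J0 - int (sum n W))"
          by (simp only: of_int_of_nat_eq)
        have kv: "kk v0 = nat J0 - sum n W" unfolding kk_def by simp
        have "- pr (V \<union> W) adjn en (X n) u = of_int (int s + int (k' v0)) + of_int ((\<Sum>a\<in>W. Y a) - int (sum n W))"
          using G2 sW 2 by simp
        also have "\<dots> = of_int (J0 - int (sum n W))" unfolding J0_def by simp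
        finally show ?thesis using kv 2 \<open>(of_nat (nat J0 - sum n W) :: rat) = of_int (J0 - int (sum n W))\<close> by simp
      next
        case 3
        have uV: "u \<notin> V" using 3 W(3) by blast
        have "c u * (Y u - int (n u)) \<le> c u * Y u" using cpos[OF 3] by simp
        moreover have "(la - 1) - c u * Y u \<ge> 0" unfolding Y_def by (rule div_bound(1)[OF cpos[OF 3]])
        ultimately have nn: "(la - 1) + en u * (Y u - int (n u)) \<ge> 0" unfolding c_def by simp
        have "- pr (V \<union> W) adjn en (X n) u = of_int (la - 1) + of_int (en u) * Lf n u"
          by (rule G3[OF 3])
        also have "\<dots> = of_int ((la - 1) + en u * (Y u - int (n u)))" using LfW[OF 3] by simp
        also have "\<dots> = of_nat (nat ((la - 1) + en u * (Y u - int (n u))))"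
          using nn by (simp only: of_nat_nat)
        also have "nat ((la - 1) + en u * (Y u - int (n u))) = kk u" unfolding kk_def using 3 uV v0(1) by auto
        finally show ?thesis .
      qed
    qed
    have "zcoef (V \<union> W) adjn en (X n) =
        (\<Prod>v\<in>V \<union> W. taylor_coeff (int (valency (V \<union> W) adjn v) - 2) (kk v))"
      by (rule zcoef_Z1[OF dtn Xs]) (rule kkpr)
    also have "\<dots> = (\<Prod>v\<in>V. taylor_coeff (int (valency (V \<union> W) adjn v) - 2) (kk v)) *
        (\<Prod>v\<in>W. taylor_coeff (int (valency (V \<union> W) adjn v) - 2) (kk v))"
      using finV W by (intro prod.union_disjoint) auto
    also have "(\<Prod>v\<in>W. taylor_coeff (int (valency (V \<union> W) adjn v) - 2) (kk v)) = 1"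
      by (intro prod.neutral ballI) (simp add: S.V3 tc_m1)
    also have "(\<Prod>v\<in>V. taylor_coeff (int (valency (V \<union> W) adjn v) - 2) (kk v)) =
        taylor_coeff (int (valency (V \<union> W) adjn v0) - 2) (kk v0) *
        (\<Prod>v\<in>V - {v0}. taylor_coeff (int (valency (V \<union> W) adjn v) - 2) (kk v))"
      using finV v0(1) by (rule prod.remove)
    also have "(\<Prod>v\<in>V - {v0}. taylor_coeff (int (valency (V \<union> W) adjn v) - 2) (kk v)) = R"
      unfolding R_def by (intro prod.cong refl) (simp add: S.V1 kk_def)
    also have "taylor_coeff (int (valency (V \<union> W) adjn v0) - 2) (kk v0) =
        (-1)^(nat J0 - sum n W) * int ((s - 1) choose (nat J0 - sum n W))"
      unfolding S.V2 kk_def s_def[symmetric] using v0(1) tc_pos[OF s1] by simp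
    finally show ?thesis by simp
  qed
  let ?P = "{x \<in> supp_dual (V \<union> W) adjn en. proj_dual V adj e (V \<union> W) adjn en x = lc}"
  obtain x0 where "x0 \<in> ?P" using ne by blast
  then have J0: "J0 \<ge> 0" using fromPi by blast
  let ?B = "Bset W (nat J0)"
  have sub: "?P \<subseteq> X ` ?B" using fromPi by blast
  have finB: "finite (X ` ?B)" using Bset_finite[OF W(1)] by simp
  have finP: "finite ?P" using finite_subset[OF sub finB] .
  have "(\<Sum>x\<in>?P. zcoef (V \<union> W) adjn en x) = (\<Sum>x\<in>X ` ?B. zcoef (V \<union> W) adjn en x)"
  proof (rule sum.mono_neutral_left[OF finB sub])
    show "\<forall>x\<in>X ` ?B - ?P. zcoef (V \<union> W) adjn en x = 0"
    proof
      fix x assume x: "x \<in> X ` ?B - ?P"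
      then obtain n where xn: "x = X n" by blast
      show "zcoef (V \<union> W) adjn en x = 0"
      proof (rule ccontr)
        assume "zcoef (V \<union> W) adjn en x \<noteq> 0"
        then have "x \<in> ?P" using Xsupp Xproj xn by simp
        then show False using x by blast
      qed
    qed
  qed
  also have "\<dots> = (\<Sum>n\<in>?B. zcoef (V \<union> W) adjn en (X n))"
    using sum.reindex[OF Xinj, of "zcoef (V \<union> W) adjn en"] by (simp add: comp_def)
  also have "\<dots> = (\<Sum>n\<in>?B. R * ((-1)^(nat J0 - sum n W) * int ((s - 1) choose (nat J0 - sum n W))))"
    by (intro sum.cong refl) (rule Xn[OF _ J0])
  also have "\<dots> = R * (\<Sum>n\<in>?B. (-1)^(nat J0 - sum n W) * int ((card W - 1) choose (nat J0 - sum n W)))"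
    unfolding s_def by (simp add: sum_distrib_left)
  also have "\<dots> = R" using comb_id[OF W(1) W(2)] by simp
  finally show ?thesis using finP zR by simp
qed

end
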